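(* The group $U_2$ is not linear, i.e. for no field $F$ and no integer $m\ge 1$ does $U_2$ embed as a subgroup of $\mathrm{GL}_m(F)$.
   Context: $K$ is a field of characteristic zero and $A_2=K\langle x,y\rangle$ is the free associative $K$-algebra with unity on $x,y$. $U_2=\{(x+f(y),\,y+b)\mid f(y)\in K\langle y\rangle,\ b\in K\}$ is the group of unitriangular automorphisms of $A_2$, where $(x+f(y),y+b)$ denotes the automorphism $x\mapsto x+f(y)$, $y\mapsto y+b$. *)

theory Defs
  imports "HOL-Analysis.Analysis" "HOL-Computational_Algebra.Polynomial"
begin

text \<open>The unitriangular automorphism (x + f(y), y + b) of the free algebra K<x,y>
  is encoded by the pair (f, b); note K<y> = K[y].  Composition of automorphisms
  (phi1 o phi2, i.e. apply phi2 first) gives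
  (x + f1(y), y + b1) o (x + f2(y), y + b2) = (x + f1(y) + f2(y + b1), y + b1 + b2).\<close>

type_synonym 'k u2 = "'k poly \<times> 'k"

definition u2_mult :: "'k::comm_ring_1 u2 \<Rightarrow> 'k u2 \<Rightarrow> 'k u2" where
  "u2_mult p q = (fst p + pcompose (fst q) [:snd p, 1:], snd p + snd q)"

definition GL_embedding :: "('k::comm_ring_1 u2 \<Rightarrow> 'f::field ^'n::finite^'n) \<Rightarrow> bool" where
  "GL_embedding h \<longleftrightarrow> inj h \<and> (\<forall>a. invertible (h a)) \<and>
     (\<forall>a b. h (u2_mult a b) = h a ** h b)"

end

theory Submission
  imports Defs "HOL-Algebra.Algebraic_Closure_Type"
begin


definition sh :: "'k::comm_ring_1 \<Rightarrow> 'k poly \<Rightarrow> 'k poly" where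
  "sh c p = pcompose p [:c,1:]"

lemma sh_sh: "sh a (sh b p) = sh (a + b) p"
  unfolding sh_def by (simp add: pcompose_assoc[symmetric] pcompose_pCons algebra_simps)

lemma sh_0[simp]: "sh 0 p = p"
  unfolding sh_def by simp

lemma sh_add: "sh c (p + q) = sh c p + sh c q"
  unfolding sh_def by (simp add: pcompose_add)

lemma sh_minus: "sh c (- p) = - sh c p"
  unfolding sh_def by (simp add: pcompose_uminus)

lemma sh_zero[simp]: "sh c 0 = 0"
  unfolding sh_def by simp

lemma delta_lower:
  fixes p :: "'k::idom poly"
  shows "sh r p - p = 0 \<or> Polynomial.degree (sh r p - p) < Polynomial.degree p"
proof (cases "Polynomial.degree p = 0")
  case True
  then obtain c where "p = [:c:]" by (meson degree_eq_zeroE)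
  then show ?thesis by (simp add: sh_def)
next
  case False
  have dq: "Polynomial.degree [:r,1::'k:] = 1" by simp
  have d: "Polynomial.degree (sh r p) = Polynomial.degree p"
    unfolding sh_def by (simp add: degree_pcompose)
  have l: "Polynomial.lead_coeff (sh r p) = Polynomial.lead_coeff p"
    unfolding sh_def by (subst lead_coeff_comp) auto
  have le: "Polynomial.degree (sh r p - p) \<le> Polynomial.degree p"
    using degree_diff_le[of "sh r p" "Polynomial.degree p" p] d by simp
  have c0: "poly.coeff (sh r p - p) (Polynomial.degree p) = 0"
    using l d by simp
  show ?thesis
  proof (rule ccontr)
    assume a: "\<not> ?thesis"
    then have "Polynomial.degree (sh r p - p) = Polynomial.degree p" using le by auto
    with c0 a show False by (metis leading_coeff_0_iff)
  qed
qed

lemma delta_pow_zero: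
  fixes p :: "'k::idom poly"
  shows "Polynomial.degree p < k \<Longrightarrow> ((\<lambda>p. sh r p - p) ^^ k) p = 0"
proof (induction k arbitrary: p)
  case 0 then show ?case by simp
next
  case (Suc k)
  have z: "((\<lambda>p. sh r p - p) ^^ k) 0 = 0" for k
    by (induction k) auto
  show ?case
  proof (cases "sh r p - p = 0")
    case True
    then show ?thesis by (simp add: funpow_Suc_right z del: funpow.simps)
  next
    case False
    with delta_lower[of r p] have "Polynomial.degree (sh r p - p) < k" using Suc.prems by auto
    from Suc.IH[OF this] show ?thesis by (simp add: funpow_Suc_right del: funpow.simps)
  qed
qed

lemma pcompose_power_left: "pcompose (p ^ n) q = (pcompose p q) ^ n"
  by (induction n) (auto simp: pcompose_mult pcompose_1)

lemma coeff_lin_pow: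
  fixes a :: "'k::comm_semiring_1"
  shows "poly.coeff ([:a,1:] ^ m) k = (if k \<le> m then of_nat (m choose k) * a ^ (m - k) else 0)"
proof (cases "k \<le> m")
  case True then show ?thesis by (simp add: coeff_linear_poly_power)
next
  case False
  have "Polynomial.degree ([:a,1:] ^ m) = m"
    by (rule degree_linear_power)
  then show ?thesis using False by (simp add: coeff_eq_0)
qed

lemma coeff_high_zero:
  assumes "\<And>k. k \<ge> n \<Longrightarrow> poly.coeff p k = 0"
  shows "p = 0 \<or> Polynomial.degree p < n"
proof (rule ccontr)
  assume "\<not> ?thesis"
  then have "p \<noteq> 0" "Polynomial.degree p \<ge> n" by auto
  then show False using assms[of "Polynomial.degree p"] by simp
qed

lemma delta_surj:
  fixes q :: "'k::field_char_0 poly"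
  assumes r: "r \<noteq> 0"
  shows "\<exists>g. sh r g - g = q"
proof -
  have "\<forall>q::'k poly. Polynomial.degree q = n \<longrightarrow> (\<exists>g. sh r g - g = q)" for n
  proof (induction n rule: less_induct)
    case (less n)
    show ?case
    proof (intro allI impI)
      fix q :: "'k poly" assume dq: "Polynomial.degree q = n"
      show "\<exists>g. sh r g - g = q"
      proof (cases "q = 0")
        case True then show ?thesis by (intro exI[of _ 0]) simp
      next
        case False
        define c where "c = Polynomial.lead_coeff q / (of_nat (Suc n) * r)"
        define g0 where "g0 = Polynomial.smult c ([:0,1:] ^ Suc n)"
        have sg: "sh r g0 - g0 = Polynomial.smult c ([:r,1:] ^ Suc n - [:0,1:] ^ Suc n)"
          unfolding g0_def sh_def by (simp add: pcompose_smult pcompose_power_left pcompose_pCons smult_diff_right)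
        define q' where "q' = q - (sh r g0 - g0)"
        have "poly.coeff q' k = 0" if kn: "k \<ge> n" for k
        proof -
          have cq: "poly.coeff q k = (if k = n then Polynomial.lead_coeff q else 0)"
            using dq kn by (auto simp: coeff_eq_0)
          have nz: "of_nat (Suc n) * r \<noteq> 0" using r of_nat_neq_0 by (metis mult_eq_0_iff)
          have e1: "poly.coeff ([:r,1:]^Suc n) k = (if k \<le> Suc n then of_nat (Suc n choose k) * r^(Suc n - k) else 0)"
            by (rule coeff_lin_pow)
          have e0: "poly.coeff ([:0,1:]^Suc n) k = (if k \<le> Suc n then of_nat (Suc n choose k) * (0::'k)^(Suc n - k) else 0)"
            by (rule coeff_lin_pow)
          have "poly.coeff q' k = poly.coeff q k - c * (poly.coeff ([:r,1:]^Suc n) k - poly.coeff ([:0,1:]^Suc n) k)"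
            unfolding q'_def sg by (simp only: coeff_diff coeff_smult right_diff_distrib)
          also have "\<dots> = 0"
          proof -
            consider "k = n" | "k = Suc n" | "k > Suc n" using kn by linarith
            then show ?thesis
            proof cases
              case 1
              have a: "poly.coeff ([:r,1:]^Suc n) k = of_nat (Suc n) * r" using e1 1 by (simp del: power_Suc)
              have b: "poly.coeff ([:0,1:]^Suc n :: 'k poly) k = 0" using e0 1 by (simp del: power_Suc)
              have cqn: "poly.coeff q k = Polynomial.lead_coeff q" using cq 1 by simp
              show ?thesis unfolding a b cqn c_def using nz by (simp add: field_simps)
            next
              case 2
              have a: "poly.coeff ([:r,1:]^Suc n) k = 1" using e1 2 by (simp del: power_Suc)
              have b: "poly.coeff ([:0,1:]^Suc n :: 'k poly) k = 1" using e0 2 by (simp del: power_Suc)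
              have cqn: "poly.coeff q k = 0" using cq 2 by simp
              show ?thesis unfolding a b cqn by simp
            next
              case 3
              have a: "poly.coeff ([:r,1:]^Suc n) k = 0" using e1 3 by (simp del: power_Suc)
              have b: "poly.coeff ([:0,1:]^Suc n :: 'k poly) k = 0" using e0 3 by (simp del: power_Suc)
              have cqn: "poly.coeff q k = 0" using cq 3 by simp
              show ?thesis unfolding a b cqn by simp
            qed
          qed
          finally show ?thesis .
        qed
        then have "q' = 0 \<or> Polynomial.degree q' < n" by (rule coeff_high_zero)
        then obtain g1 where g1: "sh r g1 - g1 = q'"
        proof
          assume "q' = 0" then show ?thesis using that[of 0] by simp
        next
          assume "Polynomial.degree q' < n"
          with less.IH show ?thesis using that by blast
        qed
        show ?thesis
        proof (intro exI[of _ "g0 + g1"])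
          have "sh r (g0 + g1) - (g0 + g1) = (sh r g0 - g0) + (sh r g1 - g1)"
            by (simp add: sh_add algebra_simps)
          also have "\<dots> = q" unfolding g1 q'_def by simp
          finally show "sh r (g0 + g1) - (g0 + g1) = q" .
        qed
      qed
    qed
  qed
  then show ?thesis by blast
qed



definition peval :: "'f::field poly \<Rightarrow> 'f^'n^'n \<Rightarrow> 'f^'n \<Rightarrow> 'f^'n" where
  "peval p A v = foldr (\<lambda>a w. a *s v + A *v w) (Polynomial.coeffs p) 0"

lemma peval_0[simp]: "peval 0 A v = 0"
  by (simp add: peval_def)

lemma peval_pCons[simp]: "peval (pCons a p) A v = a *s v + A *v peval p A v"
proof (cases "p = 0 \<and> a = 0")
  case True then show ?thesis by (simp add: peval_def)
next
  case False
  then have "Polynomial.coeffs (pCons a p) = a # Polynomial.coeffs p"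
    by (auto simp: coeffs_pCons_eq_cCons cCons_def)
  then show ?thesis by (simp add: peval_def)
qed

lemma peval_add: "peval (p + q) A v = peval p A v + peval q A v"
proof (induction p arbitrary: q rule: pCons_induct)
  case 0 then show ?case by simp
next
  case (pCons a p)
  show ?case
  proof (cases q rule: pCons_cases)
    case (pCons b q')
    then show ?thesis using pCons.IH[of q']
      by (simp add: vector_sadd_rdistrib matrix_vector_right_distrib algebra_simps)
  qed
qed

lemma peval_smult: "peval (Polynomial.smult c p) A v = c *s peval p A v"
  by (induction p rule: pCons_induct) (auto simp: vector_scalar_commute vector_add_ldistrib vector_smult_assoc)

lemma peval_minus: "peval (- p) A v = - peval p A v"
proof -
  have "peval (-p) A v + peval p A v = 0" by (simp flip: peval_add)
  then show ?thesis by (simp add: eq_neg_iff_add_eq_0)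
qed

lemma peval_diff: "peval (p - q) A v = peval p A v - peval q A v"
  using peval_add[of p "-q" A v] peval_minus[of q A v] by simp

lemma peval_mult: "peval (p * q) A v = peval p A (peval q A v)"
proof (induction p rule: pCons_induct)
  case 0 then show ?case by simp
next
  case (pCons a p)
  have "pCons a p * q = Polynomial.smult a q + pCons 0 (p * q)" by (simp add: mult_pCons_left)
  then show ?case using pCons.IH by (simp add: peval_add peval_smult)
qed

lemma peval_monom: "peval (Polynomial.monom 1 i) A v = ((\<lambda>w. A *v w) ^^ i) v"
proof (induction i)
  case 0 then show ?case by (simp add: monom_0)
next
  case (Suc i) then show ?case by (simp add: monom_Suc)
qed

lemma peval_monom_c: "peval (Polynomial.monom c i) A v = c *s ((\<lambda>w. A *v w) ^^ i) v"
proof -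
  have "Polynomial.monom c i = Polynomial.smult c (Polynomial.monom 1 i)" by (simp add: smult_monom)
  then show ?thesis by (simp only: peval_smult peval_monom)
qed

lemma peval_sum: "finite I \<Longrightarrow> peval (\<Sum>i\<in>I. f i) A v = (\<Sum>i\<in>I. peval (f i) A v)"
  by (induction I rule: finite_induct) (auto simp: peval_add)

lemma peval_lin: "peval [:- l, 1:] A w = A *v w - l *s w"
  by simp

lemma peval_const: "peval [:c:] A w = c *s w"
  by simp

lemma peval_inv:
  assumes "vec.subspace E" "\<And>u. u \<in> E \<Longrightarrow> A *v u \<in> E" "v \<in> E"
  shows "peval p A v \<in> E"
  by (induction p rule: pCons_induct)
     (auto intro!: vec.subspace_add[OF assms(1)] vec.subspace_scale[OF assms(1)] assms vec.subspace_0[OF assms(1)])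

lemma peval_annihilator:
  fixes A :: "'f::field^'n^'n"
  shows "\<exists>q. q \<noteq> 0 \<and> peval q A w0 = 0"
proof -
  define vs where "vs i = ((\<lambda>w. A *v w) ^^ i) w0" for i
  define d where "d = vec.dim (UNIV :: ('f^'n) set)"
  show ?thesis
  proof (cases "inj_on vs {..d}")
    case True
    have c: "card (vs ` {..d}) = Suc d" using True by (simp add: card_image)
    have dep: "vec.dependent (vs ` {..d})"
    proof (rule ccontr)
      assume "\<not> vec.dependent (vs ` {..d})"
      then have "card (vs ` {..d}) \<le> vec.dim (vs ` {..d})"
        using vec.independent_bound_general by blast
      also have "\<dots> \<le> d" unfolding d_def by (rule vec.dim_subset) simp
      finally show False using c by simp
    qed
    then obtain u where u: "\<exists>v\<in>vs ` {..d}. u v \<noteq> 0" "(\<Sum>v\<in>vs ` {..d}. u v *s v) = 0"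
      using vec.dependent_finite[of "vs ` {..d}"] by auto
    define q where "q = (\<Sum>i\<le>d. Polynomial.monom (u (vs i)) i)"
    have "peval q A w0 = (\<Sum>i\<le>d. u (vs i) *s vs i)"
      unfolding q_def by (simp add: peval_sum peval_monom_c vs_def)
    also have "\<dots> = (\<Sum>v\<in>vs ` {..d}. u v *s v)"
      by (subst sum.reindex[OF True]) simp
    finally have pe: "peval q A w0 = 0" using u(2) by simp
    from u(1) obtain i where i: "i \<le> d" "u (vs i) \<noteq> 0" by auto
    have "poly.coeff q i = u (vs i)"
      unfolding q_def using i(1) by (simp add: coeff_sum Polynomial.coeff_monom)
    then have "q \<noteq> 0" using i by auto
    with pe show ?thesis by blast
  next
    case False
    then obtain i j where ij: "i \<le> d" "j \<le> d" "i \<noteq> j" "vs i = vs j"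
      unfolding inj_on_def by auto
    define q where "q = Polynomial.monom (1::'f) i - Polynomial.monom 1 j"
    have pe: "peval q A w0 = 0"
      unfolding q_def peval_diff peval_monom using ij(4) by (simp add: vs_def)
    have "poly.coeff q i = 1" unfolding q_def using ij(3) by (simp add: Polynomial.coeff_monom)
    then have "q \<noteq> 0" by auto
    with pe show ?thesis by blast
  qed
qed



lemma krylov_mod:
  fixes A :: "'f::alg_closed_field^'n^'n"
  assumes E: "vec.subspace E" and S: "vec.subspace S" and SE: "S \<subseteq> E"
    and invE: "\<And>u. u \<in> E \<Longrightarrow> A *v u \<in> E"
    and invS: "\<And>u. u \<in> S \<Longrightarrow> A *v u \<in> S"
    and w0: "w0 \<in> E" "w0 \<notin> S"
  shows "\<exists>l w. w \<in> E \<and> w \<notin> S \<and> A *v w - l *s w \<in> S"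
proof -
  define P where "P q \<longleftrightarrow> q \<noteq> 0 \<and> peval q A w0 \<in> S" for q
  obtain q0 where "q0 \<noteq> 0" "peval q0 A w0 = 0" using peval_annihilator by blast
  then have "P q0" unfolding P_def using vec.subspace_0[OF S] by simp
  then obtain q where q: "P q" and qmin: "\<And>q'. P q' \<Longrightarrow> Polynomial.degree q \<le> Polynomial.degree q'"
    using ex_has_least_nat[of P q0 Polynomial.degree] by blast
  have dq: "Polynomial.degree q > 0"
  proof (rule ccontr)
    assume "\<not> ?thesis"
    then obtain c where c: "q = [:c:]" by (meson degree_eq_zeroE not_gr0)
    with q have "c \<noteq> 0" "c *s w0 \<in> S" unfolding P_def by auto
    then have "inverse c *s (c *s w0) \<in> S" using vec.subspace_scale[OF S] by blast
    with \<open>c \<noteq> 0\<close> have "w0 \<in> S" by (simp add: vector_smult_assoc)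
    with w0 show False by simp
  qed
  obtain l where "poly q l = 0" using alg_closed_imp_poly_has_root[OF dq] by blast
  then have "[:-l,1:] dvd q" by (simp add: poly_eq_0_iff_dvd)
  then obtain r where qr: "q = [:-l,1:] * r" by (elim dvdE)
  have r0: "r \<noteq> 0" using q qr unfolding P_def by auto
  have "Polynomial.degree ([:-l,1:] * r) = Polynomial.degree [:-l,1::'f:] + Polynomial.degree r"
    by (rule degree_mult_eq) (simp_all add: r0)
  then have "Polynomial.degree q = Suc (Polynomial.degree r)"
    using qr by simp
  then have "\<not> P r" using qmin[of r] by auto
  then have wS: "peval r A w0 \<notin> S" unfolding P_def using r0 by auto
  have wE: "peval r A w0 \<in> E" by (rule peval_inv[OF E invE w0(1)])
  have "A *v peval r A w0 - l *s peval r A w0 = peval q A w0"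
    unfolding qr peval_mult peval_lin ..
  with q have "A *v peval r A w0 - l *s peval r A w0 \<in> S" unfolding P_def by simp
  with wS wE show ?thesis by blast
qed

lemma common_eig_mod:
  fixes M :: "'a \<Rightarrow> 'f::alg_closed_field^'n^'n"
  assumes comm: "\<And>a b. M a ** M b = M b ** M a"
    and S: "vec.subspace S" and invS: "\<And>a u. u \<in> S \<Longrightarrow> M a *v u \<in> S"
    and SU: "S \<noteq> UNIV"
  shows "\<exists>e ch. e \<notin> S \<and> (\<forall>a. M a *v e - ch a *s e \<in> S)"
proof -
  define Q where "Q E \<longleftrightarrow> vec.subspace E \<and> S \<subseteq> E \<and> E \<noteq> S \<and> (\<forall>a. \<forall>u\<in>E. M a *v u \<in> E)" for E
  have "Q UNIV" unfolding Q_def using SU by (auto simp: vec.subspace_UNIV)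
  then obtain E where QE: "Q E" and Emin: "\<And>E'. Q E' \<Longrightarrow> vec.dim E \<le> vec.dim E'"
    using ex_has_least_nat[of Q UNIV vec.dim] by blast
  have Es: "vec.subspace E" "S \<subseteq> E" "E \<noteq> S" and invE: "\<And>a u. u \<in> E \<Longrightarrow> M a *v u \<in> E"
    using QE unfolding Q_def by auto
  obtain w0 where w0: "w0 \<in> E" "w0 \<notin> S" using Es by blast
  have eig: "\<exists>l. \<forall>u\<in>E. M a *v u - l *s u \<in> S" for a
  proof -
    obtain l w where lw: "w \<in> E" "w \<notin> S" "M a *v w - l *s w \<in> S"
      using krylov_mod[OF Es(1) S Es(2) invE invS w0] by blast
    define E' where "E' = {u \<in> E. M a *v u - l *s u \<in> S}"
    have sub: "vec.subspace E'"
      unfolding vec.subspace_def E'_def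
    proof (intro conjI ballI allI)
      show "0 \<in> {u \<in> E. M a *v u - l *s u \<in> S}" using vec.subspace_0[OF S] vec.subspace_0[OF Es(1)] by simp
    next
      fix x y assume "x \<in> {u \<in> E. M a *v u - l *s u \<in> S}" "y \<in> {u \<in> E. M a *v u - l *s u \<in> S}"
      then have "x \<in> E" "y \<in> E" "M a *v x - l *s x \<in> S" "M a *v y - l *s y \<in> S" by auto
      moreover have eq: "M a *v (x + y) - l *s (x + y) = (M a *v x - l *s x) + (M a *v y - l *s y)"
        by (simp add: matrix_vector_right_distrib vector_add_ldistrib algebra_simps)
      ultimately have "x + y \<in> E" "M a *v (x + y) - l *s (x + y) \<in> S"
        using vec.subspace_add[OF S] vec.subspace_add[OF Es(1)] by (auto simp only: eq)
      then show "x + y \<in> {u \<in> E. M a *v u - l *s u \<in> S}" by simp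
    next
      fix c x assume "x \<in> {u \<in> E. M a *v u - l *s u \<in> S}"
      then have "x \<in> E" "M a *v x - l *s x \<in> S" by auto
      moreover have "M a *v (c *s x) - l *s (c *s x) = c *s (M a *v x - l *s x)"
        by (simp add: vector_scalar_commute vector_ssub_ldistrib vector_smult_assoc mult.commute)
      ultimately have "c *s x \<in> E" "M a *v (c *s x) - l *s (c *s x) \<in> S"
        using vec.subspace_scale[OF S] vec.subspace_scale[OF Es(1)] by (auto simp only:)
      then show "c *s x \<in> {u \<in> E. M a *v u - l *s u \<in> S}" by simp
    qed
    have SE': "S \<subseteq> E'"
    proof
      fix u assume "u \<in> S"
      then show "u \<in> E'" unfolding E'_def
        using Es(2) invS[of u a] vec.subspace_scale[OF S] vec.subspace_diff[OF S] by auto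
    qed
    have "w \<in> E'" using lw unfolding E'_def by auto
    then have E'S: "E' \<noteq> S" using lw by auto
    have invE': "\<forall>b. \<forall>u\<in>E'. M b *v u \<in> E'"
    proof (intro allI ballI)
      fix b u assume u: "u \<in> E'"
      then have "u \<in> E" "M a *v u - l *s u \<in> S" unfolding E'_def by auto
      moreover have "M a *v (M b *v u) - l *s (M b *v u) = M b *v (M a *v u - l *s u)"
        by (simp add: matrix_vector_mul_assoc comm matrix_vector_mult_diff_distrib vector_scalar_commute)
      ultimately show "M b *v u \<in> E'" unfolding E'_def using invE invS by auto
    qed
    have "Q E'" unfolding Q_def using sub SE' E'S invE' by auto
    then have "vec.dim E \<le> vec.dim E'" by (rule Emin)
    moreover have "E' \<subseteq> E" unfolding E'_def by auto
    ultimately have "E' = E" using vec.subspace_dim_equal[OF sub Es(1)] by blast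
    then show ?thesis unfolding E'_def by blast
  qed
  define ch where "ch a = (SOME l. \<forall>u\<in>E. M a *v u - l *s u \<in> S)" for a
  have "\<forall>a. M a *v w0 - ch a *s w0 \<in> S"
  proof
    fix a show "M a *v w0 - ch a *s w0 \<in> S"
      using someI_ex[OF eig[of a]] w0(1) unfolding ch_def by blast
  qed
  with w0 show ?thesis by blast
qed



lemma dep_family:
  fixes vs :: "nat \<Rightarrow> 'f::field^'n"
  shows "\<exists>c. (\<exists>i\<le>vec.dim (UNIV :: ('f^'n) set). c i \<noteq> 0) \<and>
             (\<Sum>i\<le>vec.dim (UNIV :: ('f^'n) set). c i *s vs i) = 0"
proof -
  define d where "d = vec.dim (UNIV :: ('f^'n) set)"
  have "\<exists>c. (\<exists>i\<le>d. c i \<noteq> 0) \<and> (\<Sum>i\<le>d. c i *s vs i) = 0"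
  proof (cases "inj_on vs {..d}")
    case True
    have c: "card (vs ` {..d}) = Suc d" using True by (simp add: card_image)
    have dep: "vec.dependent (vs ` {..d})"
    proof (rule ccontr)
      assume "\<not> vec.dependent (vs ` {..d})"
      then have "card (vs ` {..d}) \<le> vec.dim (vs ` {..d})"
        using vec.independent_bound_general by blast
      also have "\<dots> \<le> d" unfolding d_def by (rule vec.dim_subset) simp
      finally show False using c by simp
    qed
    then obtain u where u: "\<exists>v\<in>vs ` {..d}. u v \<noteq> 0" "(\<Sum>v\<in>vs ` {..d}. u v *s v) = 0"
      using vec.dependent_finite[of "vs ` {..d}"] by auto
    have "(\<Sum>i\<le>d. u (vs i) *s vs i) = (\<Sum>v\<in>vs ` {..d}. u v *s v)"
      by (subst sum.reindex[OF True]) simp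
    then have "(\<Sum>i\<le>d. u (vs i) *s vs i) = 0" using u(2) by simp
    moreover from u(1) have "\<exists>i\<le>d. u (vs i) \<noteq> 0" by auto
    ultimately show ?thesis by (intro exI[of _ "\<lambda>i. u (vs i)"] conjI)
  next
    case False
    then obtain i j where ij: "i \<le> d" "j \<le> d" "i \<noteq> j" "vs i = vs j"
      unfolding inj_on_def by auto
    define c where "c k = (if k = i then 1 else if k = j then -1 else (0::'f))" for k
    have "(\<Sum>k\<le>d. c k *s vs k) = (\<Sum>k\<in>{i,j}. c k *s vs k)"
      by (rule sum.mono_neutral_right) (use ij in \<open>auto simp: c_def\<close>)
    also have "\<dots> = 0" using ij by (simp add: c_def)
    finally have "(\<Sum>k\<le>d. c k *s vs k) = 0" .
    moreover have "c i \<noteq> 0" by (simp add: c_def)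
    ultimately show ?thesis using ij(1) by blast
  qed
  then show ?thesis unfolding d_def .
qed

locale rep =
  fixes h :: "'k::field_char_0 u2 \<Rightarrow> 'f::alg_closed_field^'n^'n"
  assumes hmult: "\<And>a b. h (u2_mult a b) = h a ** h b"
    and hid: "h (0, 0) = mat 1"
begin

definition R :: "'k poly \<Rightarrow> 'f^'n^'n" where "R f = h (f, 0)"
definition T :: "'k \<Rightarrow> 'f^'n^'n" where "T c = h (0, c)"

lemma R_add: "R (f + g) = R f ** R g"
  unfolding R_def hmult[symmetric] by (simp add: u2_mult_def)

lemma R_comm: "R f ** R g = R g ** R f"
  by (metis R_add add.commute)

lemma R_0: "R 0 = mat 1"
  unfolding R_def by (rule hid)

lemma R_T: "R f ** T c = T c ** R (sh (-c) f)"
proof -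
  have "u2_mult (f, 0) (0, c) = u2_mult (0, c) (sh (-c) f, 0)"
  proof -
    have e: "sh c (sh (-c) f) = f" by (simp add: sh_sh)
    show ?thesis unfolding u2_mult_def using e by (simp add: sh_def)
  qed
  then show ?thesis unfolding R_def T_def hmult[symmetric] by simp
qed

lemma T_inv: "T c ** T (-c) = mat 1"
proof -
  have "u2_mult (0, c) (0, -c) = (0, 0)" by (simp add: u2_mult_def)
  then show ?thesis unfolding T_def hmult[symmetric] using hid by simp
qed

lemma T_inv_v: "T c *v (T (-c) *v v) = v"
  by (simp add: matrix_vector_mul_assoc T_inv)

definition Ginv :: "('f^'n) set \<Rightarrow> bool" where
  "Ginv S \<longleftrightarrow> (\<forall>f. \<forall>u\<in>S. R f *v u \<in> S) \<and> (\<forall>c. \<forall>u\<in>S. T c *v u \<in> S)"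

lemma fixed_mod:
  assumes S: "vec.subspace S" and G: "Ginv S" and SU: "S \<noteq> UNIV"
  shows "\<exists>v. v \<notin> S \<and> (\<forall>f. R f *v v - v \<in> S)"
proof -
  have invR: "\<And>f u. u \<in> S \<Longrightarrow> R f *v u \<in> S" and invT: "\<And>c u. u \<in> S \<Longrightarrow> T c *v u \<in> S"
    using G unfolding Ginv_def by auto
  obtain e ch where e: "e \<notin> S" and eig: "\<And>f. R f *v e - ch f *s e \<in> S"
    using common_eig_mod[of R S, OF R_comm S invR SU] by blast
  have sc0: "x = 0" if "x *s e \<in> S" for x
  proof (rule ccontr)
    assume "x \<noteq> 0"
    then have eq: "inverse x *s (x *s e) = e" by (simp add: vector_smult_assoc)
    have "inverse x *s (x *s e) \<in> S" by (rule vec.subspace_scale[OF S that])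
    then have "e \<in> S" by (simp only: eq)
    with e show False by simp
  qed
  have ch_add: "ch (f + g) = ch f * ch g" for f g
  proof -
    have "R (f + g) *v e - (ch f * ch g) *s e =
          R f *v (R g *v e - ch g *s e) + ch g *s (R f *v e - ch f *s e)"
      by (simp add: R_add matrix_vector_mul_assoc[symmetric] matrix_vector_mult_diff_distrib
          vector_scalar_commute vector_ssub_ldistrib vector_smult_assoc mult.commute)
    also have "\<dots> \<in> S"
      by (intro vec.subspace_add[OF S] vec.subspace_scale[OF S] invR eig)
    finally have a: "R (f + g) *v e - (ch f * ch g) *s e \<in> S" .
    have "(ch f * ch g - ch (f + g)) *s e = (R (f + g) *v e - ch (f + g) *s e) - (R (f + g) *v e - (ch f * ch g) *s e)"
      by (simp add: vector_sub_rdistrib)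
    also have "\<dots> \<in> S" by (intro vec.subspace_diff[OF S] eig a)
    finally have "ch f * ch g - ch (f + g) = 0" by (rule sc0)
    then show ?thesis by simp
  qed
  have ch0: "ch 0 = 1"
  proof -
    have "(1 - ch 0) *s e = R 0 *v e - ch 0 *s e" by (simp add: R_0 vector_sub_rdistrib)
    then have "(1 - ch 0) *s e \<in> S" using eig[of 0] by simp
    then have "1 - ch 0 = 0" by (rule sc0)
    then show ?thesis by simp
  qed
  define vn where "vn n = T (- of_nat n) *v e" for n :: nat
  have vn_S: "vn n \<notin> S" for n
  proof
    assume "vn n \<in> S"
    then have "T (of_nat n) *v vn n \<in> S" by (rule invT)
    then show False using e unfolding vn_def by (simp add: T_inv_v)
  qed
  define chn where "chn n f = ch (sh (of_nat n) f)" for n :: nat and f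
  have vn_eig: "R f *v vn n - chn n f *s vn n \<in> S" for n f
  proof -
    have "R f *v vn n = T (- of_nat n) *v (R (sh (of_nat n) f) *v e)"
      unfolding vn_def by (simp add: matrix_vector_mul_assoc R_T)
    then have "R f *v vn n - chn n f *s vn n = T (- of_nat n) *v (R (sh (of_nat n) f) *v e - chn n f *s e)"
      unfolding vn_def chn_def by (simp add: matrix_vector_mult_diff_distrib vector_scalar_commute)
    also have "\<dots> \<in> S" unfolding chn_def by (intro invT eig)
    finally show ?thesis .
  qed
  define d where "d = vec.dim (UNIV :: ('f^'n) set)"
  define P where "P c \<longleftrightarrow> (\<exists>i\<le>d. c i \<noteq> 0) \<and> (\<Sum>i\<le>d. c i *s vn i) \<in> S" for c :: "nat \<Rightarrow> 'f"
  obtain c1 where c1: "\<exists>i\<le>d. c1 i \<noteq> 0" "(\<Sum>i\<le>d. c1 i *s vn i) = 0"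
    using dep_family[of vn] unfolding d_def by blast
  have "P c1" unfolding P_def using c1 vec.subspace_0[OF S] by simp
  then obtain c0 where "P c0" by blast
  then obtain c where Pc: "P c" and cmin: "\<And>c'. P c' \<Longrightarrow> card {i\<in>{..d}. c i \<noteq> 0} \<le> card {i\<in>{..d}. c' i \<noteq> 0}"
    using ex_has_least_nat[of P c0 "\<lambda>c. card {i\<in>{..d}. c i \<noteq> 0}"] by blast
  define Z where "Z = {i\<in>{..d}. c i \<noteq> 0}"
  obtain i0 where i0: "i0 \<in> Z" using Pc unfolding P_def Z_def by auto
  have sumS: "(\<Sum>i\<le>d. c i *s vn i) \<in> S" using Pc unfolding P_def by auto
  have same: "chn j f = chn i0 f" if j: "j \<in> Z" for j f
  proof -
    define c' where "c' i = c i * (chn i f - chn i0 f)" for i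
    have s1: "(\<Sum>i\<le>d. c i *s (R f *v vn i - chn i f *s vn i)) \<in> S"
      by (intro vec.subspace_sum[OF S] vec.subspace_scale[OF S] vn_eig)
    have s2: "R f *v (\<Sum>i\<le>d. c i *s vn i) \<in> S" by (intro invR sumS)
    have "(\<Sum>i\<le>d. c' i *s vn i) =
          R f *v (\<Sum>i\<le>d. c i *s vn i) - (\<Sum>i\<le>d. c i *s (R f *v vn i - chn i f *s vn i))
          - chn i0 f *s (\<Sum>i\<le>d. c i *s vn i)"
      unfolding c'_def
      by (simp add: vec.sum vector_scalar_commute vector_ssub_ldistrib
          vector_smult_assoc sum_subtractf[symmetric] vec.scale_sum_right right_diff_distrib
          vector_sub_rdistrib mult.commute mult.left_commute)
    also have "\<dots> \<in> S"
      by (intro vec.subspace_diff[OF S] vec.subspace_scale[OF S] s1 s2 sumS)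
    finally have c'S: "(\<Sum>i\<le>d. c' i *s vn i) \<in> S" .
    have sub: "{i\<in>{..d}. c' i \<noteq> 0} \<subseteq> Z - {i0}"
    proof
      fix x assume x: "x \<in> {i\<in>{..d}. c' i \<noteq> 0}"
      then have "x \<le> d" "c x * (chn x f - chn i0 f) \<noteq> 0" unfolding c'_def by auto
      then show "x \<in> Z - {i0}" unfolding Z_def by auto
    qed
    have "card {i\<in>{..d}. c' i \<noteq> 0} \<le> card (Z - {i0})"
      by (rule card_mono[OF _ sub]) (simp add: Z_def)
    also have "\<dots> < card Z" using i0 by (intro card_Diff1_less) (auto simp: Z_def)
    finally have "\<not> P c'" using cmin[of c'] unfolding Z_def by linarith
    then have "\<forall>i\<le>d. c' i = 0" using c'S unfolding P_def by auto
    then show ?thesis using j unfolding Z_def c'_def by auto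
  qed
  have "\<exists>j\<in>Z. j \<noteq> i0"
  proof (rule ccontr)
    assume na: "\<not> ?thesis"
    have cz: "c i = 0" if "i \<le> d" "i \<noteq> i0" for i
      using na that unfolding Z_def by blast
    have "(\<Sum>i\<le>d. c i *s vn i) = (\<Sum>i\<in>{i0}. c i *s vn i)"
      by (rule sum.mono_neutral_right) (use i0 cz in \<open>auto simp: Z_def\<close>)
    moreover have "(\<Sum>i\<in>{i0}. c i *s vn i) = c i0 *s vn i0" by simp
    ultimately have "c i0 *s vn i0 \<in> S" using sumS by (simp only:)
    then have "inverse (c i0) *s (c i0 *s vn i0) \<in> S" by (rule vec.subspace_scale[OF S])
    moreover have "c i0 \<noteq> 0" using i0 by (simp add: Z_def)
    then have "inverse (c i0) *s (c i0 *s vn i0) = vn i0" by (simp add: vector_smult_assoc)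
    ultimately have "vn i0 \<in> S" by (simp only:)
    with vn_S[of i0] show False by blast
  qed
  then obtain j where j: "j \<in> Z" "j \<noteq> i0" by blast
  define a where "a = min i0 j"
  define b where "b = max i0 j"
  have ab: "a < b" using j unfolding a_def b_def by auto
  have chab: "ch (sh (of_nat a) f) = ch (sh (of_nat b) f)" for f
  proof (cases "i0 \<le> j")
    case True then show ?thesis using same[OF j(1), of f] unfolding chn_def a_def b_def by (simp add: max_def min_def)
  next
    case False then show ?thesis using same[OF j(1), of f] unfolding chn_def a_def b_def by (simp add: max_def min_def)
  qed
  define r :: 'k where "r = of_nat b - of_nat a"
  have r0: "r \<noteq> 0" using ab unfolding r_def by simp
  have ch1: "ch q = 1" for q
  proof -
    obtain g0 where g0: "sh r g0 - g0 = q" using delta_surj[OF r0] by blast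
    have "ch g0 = ch (sh r g0)"
      using chab[of "sh (- of_nat a) g0"] unfolding r_def by (simp add: sh_sh)
    also have "sh r g0 = g0 + q" using g0 by (metis diff_add_cancel add.commute)
    finally have "ch g0 = ch g0 * ch q" by (simp add: ch_add)
    moreover have "ch g0 \<noteq> 0"
    proof
      assume "ch g0 = 0"
      then have "ch (g0 + - g0) = 0" by (simp only: ch_add) simp
      then show False using ch0 by simp
    qed
    ultimately show ?thesis by simp
  qed
  have "\<forall>f. R f *v e - e \<in> S" using eig ch1 by simp
  with e show ?thesis by blast
qed

end



definition msc :: "'f::field \<Rightarrow> 'f^'n^'m \<Rightarrow> 'f^'n^'m" where
  "msc c A = (\<chi> i j. c * A $ i $ j)"

definition flat :: "'f::field^'n^'m \<Rightarrow> 'f^('m \<times> 'n)" where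
  "flat A = (\<chi> p. A $ fst p $ snd p)"

definition unflat :: "'f::field^('m \<times> 'n) \<Rightarrow> 'f^'n^'m" where
  "unflat x = (\<chi> i j. x $ (i, j))"

lemma unflat_flat[simp]: "unflat (flat A) = A"
  by (simp add: unflat_def flat_def vec_eq_iff)

lemma unflat_add: "unflat (x + y) = unflat x + unflat y"
  by (simp add: unflat_def vec_eq_iff)

lemma unflat_scale: "unflat (c *s x) = msc c (unflat x)"
  by (simp add: unflat_def msc_def vec_eq_iff)

lemma matrix_add_rdistrib': "(A + B) ** C = A ** C + B ** (C :: 'f::field^'k^'n)"
  by (simp add: matrix_matrix_mult_def vec_eq_iff sum.distrib distrib_right)

lemma msc_mult_left: "A ** msc c B = msc c (A ** B)"
  by (simp add: matrix_matrix_mult_def msc_def vec_eq_iff sum_distrib_left mult.left_commute)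

lemma msc_mult_right: "msc c A ** B = msc c (A ** B)"
  by (simp add: matrix_matrix_mult_def msc_def vec_eq_iff sum_distrib_left mult.assoc)

lemma msc_diff: "msc c A - msc c B = msc c (A - B)"
  by (simp add: msc_def vec_eq_iff right_diff_distrib)

lemma msc_vec: "msc c A *v w = c *s (A *v w)"
  by (simp add: msc_def matrix_vector_mult_def vec_eq_iff sum_distrib_left mult.assoc)

lemma lin_op:
  fixes G :: "'f::field^'n^'n \<Rightarrow> 'f^'n^'n"
  assumes add: "\<And>A B. G (A + B) = G A + G B" and sc: "\<And>c A. G (msc c A) = msc c (G A)"
  shows "Vector_Spaces.linear (*s) (*s) (\<lambda>x. G (unflat x) *v w)"
proof -
  have "\<forall>x y. G (unflat (x + y)) *v w = G (unflat x) *v w + G (unflat y) *v w"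
    by (simp add: unflat_add add matrix_vector_mult_add_rdistrib)
  moreover have "\<forall>c x. G (unflat (c *s x)) *v w = c *s (G (unflat x) *v w)"
    by (simp add: unflat_scale sc msc_vec)
  ultimately show ?thesis
    by (simp only: Vector_Spaces.linear_iff vec.vector_space_axioms simp_thms)
qed

context rep
begin

definition V1 :: "('f^'n) set" where "V1 = {v. \<forall>f. R f *v v = v}"

lemma V1_sub: "vec.subspace V1"
  unfolding vec.subspace_def V1_def
  by (simp add: matrix_vector_right_distrib vector_scalar_commute)

lemma V1_T: "v \<in> V1 \<Longrightarrow> T c *v v \<in> V1"
  unfolding V1_def by (simp add: matrix_vector_mul_assoc R_T) (simp add: matrix_vector_mul_assoc[symmetric])

lemma V1_Ginv: "Ginv V1"
  unfolding Ginv_def using V1_T by (auto simp: V1_def)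

definition V2 :: "('f^'n) set" where "V2 = {v. \<forall>f. R f *v v - v \<in> V1}"

lemma V2_add:
  assumes "w \<in> V2"
  shows "R (f + g) *v w - w = (R f *v w - w) + (R g *v w - w)"
proof -
  have "R g *v w - w \<in> V1" using assms unfolding V2_def by auto
  then have fx: "R f *v (R g *v w - w) = R g *v w - w" unfolding V1_def by auto
  have "R (f + g) *v w = R f *v (w + (R g *v w - w))"
    by (simp add: R_add matrix_vector_mul_assoc[symmetric])
  also have "\<dots> = R f *v w + (R g *v w - w)"
    by (simp only: matrix_vector_right_distrib fx)
  finally show ?thesis by simp
qed

lemma V2_neg:
  assumes "w \<in> V2"
  shows "R (- f) *v w - w = - (R f *v w - w)"
proof -
  have "R (f + - f) *v w - w = (R f *v w - w) + (R (-f) *v w - w)" by (rule V2_add[OF assms])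
  then have "0 = (R f *v w - w) + (R (-f) *v w - w)" by (simp add: R_0)
  then show ?thesis by (metis add.commute eq_neg_iff_add_eq_0)
qed

lemma V2_T: "w \<in> V2 \<Longrightarrow> T (-1) *v w \<in> V2"
proof -
  assume w: "w \<in> V2"
  have "R f *v (T (-1) *v w) - T (-1) *v w = T (-1) *v (R (sh 1 f) *v w - w)" for f
    by (simp add: matrix_vector_mul_assoc R_T matrix_vector_mult_diff_distrib)
  moreover have "T (-1) *v (R (sh 1 f) *v w - w) \<in> V1" for f
    using w V1_T unfolding V2_def by auto
  ultimately show ?thesis unfolding V2_def by auto
qed

lemma R_conj: "R (sh 1 f) = T 1 ** R f ** T (-1)"
proof -
  have "R (sh 1 f) ** T 1 = T 1 ** R f" by (simp add: R_T sh_sh)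
  then have "R (sh 1 f) ** T 1 ** T (-1) = T 1 ** R f ** T (-1)" by simp
  then show ?thesis by (simp add: matrix_mul_assoc[symmetric] T_inv)
qed

definition D :: "'k poly \<Rightarrow> 'f^'n^'n" where "D f = R f - mat 1"
definition Ad :: "'f^'n^'n \<Rightarrow> 'f^'n^'n" where "Ad B = T 1 ** B ** T (-1) - B"
definition dl :: "'k poly \<Rightarrow> 'k poly" where "dl f = sh 1 f - f"

lemma D_vec: "D f *v w = R f *v w - w"
  by (simp add: D_def matrix_vector_mult_diff_rdistrib)

lemma Ad_vec: "Ad B *v w = T 1 *v (B *v (T (-1) *v w)) - B *v w"
  by (simp add: Ad_def matrix_vector_mult_diff_rdistrib matrix_vector_mul_assoc matrix_mul_assoc)

lemma D_dl:
  assumes w: "w \<in> V2"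
  shows "D (dl f) *v w = Ad (D f) *v w"
proof -
  have "D (dl f) *v w = R (sh 1 f + - f) *v w - w" by (simp add: D_vec dl_def)
  also have "\<dots> = (R (sh 1 f) *v w - w) + (R (- f) *v w - w)" by (rule V2_add[OF w])
  also have "\<dots> = (R (sh 1 f) *v w - w) - (R f *v w - w)" by (simp add: V2_neg[OF w])
  also have "R (sh 1 f) *v w - w = T 1 *v (R f *v (T (-1) *v w)) - T 1 *v (T (-1) *v w)"
    by (simp add: R_conj matrix_vector_mul_assoc matrix_mul_assoc T_inv)
  finally show ?thesis
    by (simp add: Ad_vec D_vec matrix_vector_mult_diff_distrib)
qed

lemma D_dl_pow:
  "w \<in> V2 \<Longrightarrow> D ((dl ^^ k) f) *v w = (Ad ^^ k) (D f) *v w"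
proof (induction k arbitrary: w)
  case 0 then show ?case by simp
next
  case (Suc k)
  have w': "T (-1) *v w \<in> V2" by (rule V2_T[OF Suc.prems])
  have "D ((dl ^^ Suc k) f) *v w = Ad (D ((dl ^^ k) f)) *v w"
    by (simp add: D_dl[OF Suc.prems])
  also have "\<dots> = T 1 *v (D ((dl ^^ k) f) *v (T (-1) *v w)) - D ((dl ^^ k) f) *v w"
    by (rule Ad_vec)
  also have "\<dots> = T 1 *v ((Ad ^^ k) (D f) *v (T (-1) *v w)) - (Ad ^^ k) (D f) *v w"
    using Suc.IH[OF w'] Suc.IH[OF Suc.prems] by simp
  also have "\<dots> = (Ad ^^ Suc k) (D f) *v w" by (simp add: Ad_vec)
  finally show ?case .
qed

lemma Ad_add: "Ad (A + B) = Ad A + Ad B"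
  by (simp add: Ad_def matrix_add_ldistrib matrix_add_rdistrib')

lemma Ad_sc: "Ad (msc c A) = msc c (Ad A)"
  by (simp add: Ad_def msc_mult_left msc_mult_right msc_diff)

lemma Adk_add: "(Ad ^^ k) (A + B) = (Ad ^^ k) A + (Ad ^^ k) B"
  by (induction k) (auto simp: Ad_add)

lemma Adk_sc: "(Ad ^^ k) (msc c A) = msc c ((Ad ^^ k) A)"
  by (induction k) (auto simp: Ad_sc)

lemma dl_pow_zero: "Polynomial.degree p < k \<Longrightarrow> (dl ^^ k) p = 0"
proof -
  assume "Polynomial.degree p < k"
  from delta_pow_zero[OF this, of 1] show ?thesis
    by (simp add: dl_def[abs_def])
qed

lemma dl_pow_surj: "\<exists>f. (dl ^^ k) f = g"
proof (induction k arbitrary: g)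
  case 0 then show ?case by simp
next
  case (Suc k)
  obtain g1 where "dl g1 = g" using delta_surj[of 1 g] unfolding dl_def by auto
  moreover obtain f where "(dl ^^ k) f = g1" using Suc.IH by blast
  ultimately show ?case by (intro exI[of _ f]) simp
qed

lemma D_0: "D 0 = 0"
  by (simp add: D_def R_0)

lemma key:
  assumes w: "w \<in> V2"
  shows "w \<in> V1"
proof -
  define Ds where "Ds = range (\<lambda>f. flat (D f))"
  obtain B where B: "B \<subseteq> Ds" "vec.independent B" "Ds \<subseteq> vec.span B"
    by (rule vec.maximal_independent_subset[of Ds]) blast
  have fB: "finite B" using B(2) by (rule vec.finiteI_independent)
  have "\<forall>b\<in>B. \<exists>p. b = flat (D p)" using B(1) unfolding Ds_def by auto
  then obtain p where p: "\<And>b. b \<in> B \<Longrightarrow> b = flat (D (p b))" by metis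
  define K where "K = Suc (Max (insert 0 (Polynomial.degree ` p ` B)))"
  have degK: "Polynomial.degree (p b) < K" if "b \<in> B" for b
  proof -
    have "Polynomial.degree (p b) \<le> Max (insert 0 (Polynomial.degree ` p ` B))"
      using fB that by (intro Max_ge) auto
    then show ?thesis unfolding K_def by simp
  qed
  define L where "L x = (Ad ^^ K) (unflat x) *v w" for x
  have lin: "Vector_Spaces.linear (*s) (*s) L"
    unfolding L_def by (rule lin_op) (simp_all add: Adk_add Adk_sc)
  have L0: "L b = 0" if "b \<in> B" for b
  proof -
    have "unflat b = D (p b)" using p[OF that] by (metis unflat_flat)
    then have "L b = (Ad ^^ K) (D (p b)) *v w" unfolding L_def by simp
    also have "\<dots> = D ((dl ^^ K) (p b)) *v w" using D_dl_pow[OF w] by simp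
    also have "\<dots> = 0" using dl_pow_zero[OF degK[OF that]] by (simp add: D_0)
    finally show ?thesis .
  qed
  have "R g *v w = w" for g
  proof -
    obtain f where f: "(dl ^^ K) f = g" using dl_pow_surj by blast
    have "flat (D f) \<in> vec.span B" using B(3) unfolding Ds_def by auto
    have Ladd: "L (x + y) = L x + L y" for x y
      unfolding L_def by (simp add: unflat_add Adk_add matrix_vector_mult_add_rdistrib)
    have Lsc: "L (c *s x) = c *s L x" for c x
      unfolding L_def by (simp add: unflat_scale Adk_sc msc_vec)
    have Lz: "L 0 = 0" using Lsc[of 0 0] by simp
    have "vec.subspace {x. L x = 0}"
      unfolding vec.subspace_def using Ladd Lsc Lz by simp
    then have "vec.span B \<subseteq> {x. L x = 0}"
      using L0 by (intro vec.span_minimal) auto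
    with \<open>flat (D f) \<in> vec.span B\<close> have "L (flat (D f)) = 0" by auto
    then have "(Ad ^^ K) (D f) *v w = 0" unfolding L_def by simp
    then have "D g *v w = 0" using D_dl_pow[OF w, of K f] f by simp
    then show ?thesis by (simp add: D_vec)
  qed
  then show ?thesis unfolding V1_def by simp
qed

lemma V1_UNIV: "V1 = UNIV"
proof (rule ccontr)
  assume "V1 \<noteq> UNIV"
  from fixed_mod[OF V1_sub V1_Ginv this] obtain v where v: "v \<notin> V1" "\<forall>f. R f *v v - v \<in> V1"
    by blast
  then have "v \<in> V2" unfolding V2_def by simp
  then have "v \<in> V1" by (rule key)
  with v show False by simp
qed

lemma R_trivial: "R f = mat 1"
  using V1_UNIV unfolding V1_def by (auto simp: matrix_eq)

end



definition mm :: "'f::field^'n^'m \<Rightarrow> 'f alg_closure^'n^'m" where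
  "mm A = (\<chi> i j. to_ac (A $ i $ j))"

lemma mm_mult: "mm (A ** B) = mm A ** mm B"
  by (simp add: mm_def matrix_matrix_mult_def vec_eq_iff to_ac_sum)

lemma mm_one: "mm (mat 1 :: 'f::field^'n^'n) = mat 1"
  by (simp add: mm_def mat_def vec_eq_iff)

lemma mm_inj: "mm A = mm B \<Longrightarrow> A = B"
  by (simp add: mm_def vec_eq_iff)

theorem corollary1:
  fixes h :: "'k::field_char_0 u2 \<Rightarrow> 'f::field ^'n::finite^'n"
  shows "\<not> GL_embedding h"
proof
  assume G: "GL_embedding h"
  have inj: "inj h" and inv: "\<And>a. invertible (h a)" and hm: "\<And>a b. h (u2_mult a b) = h a ** h b"
    using G unfolding GL_embedding_def by auto
  have ee: "u2_mult (0, 0) (0, 0) = ((0::'k poly), (0::'k))" by (simp add: u2_mult_def)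
  have idem: "h (0, 0) = h (0, 0) ** h (0, 0)" using hm[of "(0,0)" "(0,0)"] ee by simp
  obtain B where B: "h (0, 0) ** B = mat 1" using inv[of "(0,0)"] unfolding invertible_def by blast
  have hid: "h (0, 0) = mat 1"
  proof -
    have "h (0, 0) = h (0, 0) ** (h (0, 0) ** B)" using B by simp
    also have "\<dots> = (h (0, 0) ** h (0, 0)) ** B" by (simp add: matrix_mul_assoc)
    also have "\<dots> = mat 1" using idem B by simp
    finally show ?thesis .
  qed
  define h' where "h' u = mm (h u)" for u
  interpret r: rep h'
    by unfold_locales (simp_all add: h'_def hm mm_mult hid mm_one)
  have "h' (1, 0) = h' (0, 0)"
    using r.R_trivial[of 1] r.R_trivial[of 0] unfolding r.R_def by simp
  then have "h (1, 0) = h (0, 0)" unfolding h'_def by (rule mm_inj)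
  with inj have "((1::'k poly), (0::'k)) = (0, 0)" by (meson injD)
  then show False by simp
qed

end
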